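(* For all integers $n,A\ge1$ and $D\ge0$, and every sufficiently large $K>1$, there exist $K_1\le K_2\le\dots\le K_{D+1}=K$ with $K_{j+1}\sim_{n,j}K_j^{A+1}$ (comparable up to multiplicative constants independent of $K$) such that, for every normalized polynomial $P$ of degree at most $D$ in $n$ real variables with real coefficients, there exist multiindices $\alpha_D<\alpha_{D-1}<\dots<\alpha_1$ with $|\alpha_j|=D-j$ such that $$\{x:|P(x)|<1/K_{D+1}\}\cap B(0,1)\subseteq\bigcup_{j=1}^D N_{1/K_j^A}\Big(Z_{\partial^{\alpha_j}P}\cap\{|\nabla\partial^{\alpha_j}P|\ge1/K_j\}\Big).$$
   Context: A polynomial is normalized if the $\ell^1$ sum of the absolute values of its coefficients equals $1$. $Z_Q=\{x\in\mathbb{R}^n:Q(x)=0\}$. $N_\sigma(E)$ is the $\sigma$-neighborhood of $E$. For multiindices, $\alpha<\beta$ means $\alpha\le\beta$ componentwise and $\alpha\ne\beta$; $\partial^\alpha$ is the corresponding partial derivative. *)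

theory Defs
  imports "HOL-Analysis.Analysis"
begin

text \<open>Real polynomials in n variables (n = CARD('n)), represented by their
coefficient function on multiindices 'n \<Rightarrow> nat (finitely supported).
Multiindices are ordered by the pointwise (library) order on functions,
so alpha < beta means alpha \<le> beta componentwise and alpha \<noteq> beta.\<close>

type_synonym 'n mpoly_coeffs = "('n \<Rightarrow> nat) \<Rightarrow> real"

definition mindex_size :: "('n::finite \<Rightarrow> nat) \<Rightarrow> nat" where
  "mindex_size \<alpha> = (\<Sum>i\<in>UNIV. \<alpha> i)"

definition is_mpoly :: "'n mpoly_coeffs \<Rightarrow> bool" where
  "is_mpoly c \<longleftrightarrow> finite {\<alpha>. c \<alpha> \<noteq> 0}"

definition mpoly_deg_le :: "'n::finite mpoly_coeffs \<Rightarrow> nat \<Rightarrow> bool" where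
  "mpoly_deg_le c D \<longleftrightarrow> (\<forall>\<alpha>. c \<alpha> \<noteq> 0 \<longrightarrow> mindex_size \<alpha> \<le> D)"

definition mpoly_eval :: "'n::finite mpoly_coeffs \<Rightarrow> real ^ 'n \<Rightarrow> real" where
  "mpoly_eval c x = (\<Sum>\<alpha> | c \<alpha> \<noteq> 0. c \<alpha> * (\<Prod>i\<in>UNIV. (x $ i) ^ (\<alpha> i)))"

definition mpoly_l1 :: "'n mpoly_coeffs \<Rightarrow> real" where
  "mpoly_l1 c = (\<Sum>\<alpha> | c \<alpha> \<noteq> 0. \<bar>c \<alpha>\<bar>)"

definition normalized :: "'n mpoly_coeffs \<Rightarrow> bool" where
  "normalized c \<longleftrightarrow> mpoly_l1 c = 1"

text \<open>Partial derivative \<partial>^beta: d^beta x^(gamma+beta) = (gamma+beta)!/gamma! x^gamma.\<close>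
definition mpoly_pderiv :: "('n::finite \<Rightarrow> nat) \<Rightarrow> 'n mpoly_coeffs \<Rightarrow> 'n mpoly_coeffs" where
  "mpoly_pderiv \<beta> c = (\<lambda>\<gamma>. c (\<lambda>i. \<gamma> i + \<beta> i) *
       (\<Prod>i\<in>UNIV. pochhammer (real (\<gamma> i) + 1) (\<beta> i)))"

definition unit_mindex :: "'n \<Rightarrow> ('n \<Rightarrow> nat)" where
  "unit_mindex i = (\<lambda>k. if k = i then 1 else 0)"

definition mpoly_grad :: "'n::finite mpoly_coeffs \<Rightarrow> real ^ 'n \<Rightarrow> real ^ 'n" where
  "mpoly_grad c x = (\<chi> i. mpoly_eval (mpoly_pderiv (unit_mindex i) c) x)"

definition zero_set :: "'n::finite mpoly_coeffs \<Rightarrow> (real ^ 'n) set" where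
  "zero_set c = {x. mpoly_eval c x = 0}"

definition nbhd :: "real \<Rightarrow> 'a::metric_space set \<Rightarrow> 'a set" where
  "nbhd \<sigma> E = {x. \<exists>y\<in>E. dist x y < \<sigma>}"

end

theory Submission
  imports Defs
begin

lemma pderiv_zero: "mpoly_pderiv (\<lambda>_. 0) c = c"
  by (simp add: mpoly_pderiv_def)

lemma pderiv_compose:
  "mpoly_pderiv a (mpoly_pderiv b c) = mpoly_pderiv (\<lambda>i. a i + b i) c"
proof
  fix \<gamma> :: "'a \<Rightarrow> nat"
  have e: "(\<lambda>i. \<gamma> i + a i + b i) = (\<lambda>i. \<gamma> i + (a i + b i))" by (simp add: add.assoc)
  have p: "pochhammer (real (\<gamma> i) + 1) (a i + b i) =
      pochhammer (real (\<gamma> i) + 1) (a i) * pochhammer (real (\<gamma> i + a i) + 1) (b i)" for i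
    by (simp add: pochhammer_product' add_ac)
  show "mpoly_pderiv a (mpoly_pderiv b c) \<gamma> = mpoly_pderiv (\<lambda>i. a i + b i) c \<gamma>"
    unfolding mpoly_pderiv_def using e by (simp add: p prod.distrib mult_ac)
qed

lemma pderiv_is_mpoly:
  assumes "is_mpoly c" shows "is_mpoly (mpoly_pderiv a c)"
proof -
  have "{\<gamma>. mpoly_pderiv a c \<gamma> \<noteq> 0} \<subseteq> (\<lambda>\<gamma>. (\<lambda>i. \<gamma> i + a i)) -` {\<alpha>. c \<alpha> \<noteq> 0}"
    by (auto simp: mpoly_pderiv_def)
  moreover have "inj (\<lambda>\<gamma>. (\<lambda>i. \<gamma> i + a i))"
    by (auto simp: inj_def fun_eq_iff)
  ultimately show ?thesis using assms unfolding is_mpoly_def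
    by (meson finite_subset finite_vimageI)
qed

lemma mindex_size_add: "mindex_size (\<lambda>i. \<gamma> i + a i) = mindex_size \<gamma> + mindex_size a"
  by (simp add: mindex_size_def sum.distrib)

lemma pderiv_deg:
  assumes "mpoly_deg_le c D" shows "mpoly_deg_le (mpoly_pderiv a c) D"
  unfolding mpoly_deg_le_def
proof (intro allI impI)
  fix \<gamma> assume "mpoly_pderiv a c \<gamma> \<noteq> 0"
  then have "c (\<lambda>i. \<gamma> i + a i) \<noteq> 0" by (auto simp: mpoly_pderiv_def)
  then have "mindex_size (\<lambda>i. \<gamma> i + a i) \<le> D" using assms by (auto simp: mpoly_deg_le_def)
  then show "mindex_size \<gamma> \<le> D" by (simp add: mindex_size_add)
qed


definition mmono :: "('n::finite \<Rightarrow> nat) \<Rightarrow> real ^ 'n \<Rightarrow> real" where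
  "mmono \<alpha> x = (\<Prod>i\<in>UNIV. (x $ i) ^ (\<alpha> i))"

lemma le_mindex_size: "\<alpha> i \<le> mindex_size (\<alpha>::'n::finite \<Rightarrow> nat)"
  unfolding mindex_size_def by (rule member_le_sum) auto

lemma finite_SD: "finite {\<alpha>::'n::finite \<Rightarrow> nat. mindex_size \<alpha> \<le> D}"
proof -
  have "{\<alpha>::'n \<Rightarrow> nat. mindex_size \<alpha> \<le> D} \<subseteq> PiE UNIV (\<lambda>_. {..D})"
    using le_mindex_size order_trans by (fastforce simp: PiE_def extensional_def)
  moreover have "finite (PiE (UNIV::'n set) (\<lambda>_. {..D}))" by (rule finite_PiE) auto
  ultimately show ?thesis by (rule finite_subset)
qed

lemma eval_SD:
  assumes "mpoly_deg_le c D"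
  shows "mpoly_eval c x = (\<Sum>\<alpha>\<in>{\<alpha>. mindex_size \<alpha> \<le> D}. c \<alpha> * mmono \<alpha> x)"
  unfolding mpoly_eval_def mmono_def
  by (rule sum.mono_neutral_left[OF finite_SD]) (use assms in \<open>auto simp: mpoly_deg_le_def\<close>)

lemma l1_SD:
  assumes "mpoly_deg_le c D"
  shows "mpoly_l1 c = (\<Sum>\<alpha>\<in>{\<alpha>. mindex_size \<alpha> \<le> D}. \<bar>c \<alpha>\<bar>)"
  unfolding mpoly_l1_def
  by (rule sum.mono_neutral_left[OF finite_SD]) (use assms in \<open>auto simp: mpoly_deg_le_def\<close>)

lemma poch_le_fact:
  assumes "g + a \<le> D"
  shows "pochhammer (real g + 1) a \<le> fact D"
proof -
  have "(fact (g + a) :: real) = pochhammer 1 g * pochhammer (1 + real g) a"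
    by (simp add: pochhammer_fact pochhammer_product')
  also have "\<dots> = fact g * pochhammer (real g + 1) a"
    by (simp add: pochhammer_fact add.commute)
  finally have e: "(fact (g + a) :: real) = fact g * pochhammer (real g + 1) a" .
  have "pochhammer (real g + 1) a \<le> fact g * pochhammer (real g + 1) a"
    using mult_right_mono[OF fact_ge_1 pochhammer_nonneg[of "real g + 1" a]] by simp
  also have "\<dots> = fact (g + a)" using e by simp
  also have "\<dots> \<le> (fact D :: real)" using assms fact_mono by blast
  finally show ?thesis .
qed

lemma poch_ge_1: "pochhammer (real g + 1) a \<ge> 1"
proof (induction a)
  case 0 then show ?case by simp
next
  case (Suc a)
  have "pochhammer (real g + 1) (Suc a) = pochhammer (real g + 1) a * (real g + 1 + real a)"
    by (simp add: pochhammer_Suc)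
  moreover have "real g + 1 + real a \<ge> 1" by simp
  ultimately show ?case using Suc
    by (metis mult_mono' mult_1 order_trans zero_le_one)
qed

lemma pderiv_coeff_bound:
  fixes c :: "'n::finite mpoly_coeffs"
  assumes "mpoly_deg_le c D"
  shows "\<bar>mpoly_pderiv a c \<gamma>\<bar> \<le> fact D ^ CARD('n) * \<bar>c (\<lambda>i. \<gamma> i + a i)\<bar>"
proof (cases "c (\<lambda>i. \<gamma> i + a i) = 0")
  case True then show ?thesis by (simp add: mpoly_pderiv_def)
next
  case False
  then have sz: "mindex_size (\<lambda>i. \<gamma> i + a i) \<le> D" using assms by (auto simp: mpoly_deg_le_def)
  have "(\<Prod>i\<in>UNIV. pochhammer (real (\<gamma> i) + 1) (a i)) \<le> (\<Prod>i\<in>(UNIV::'n set). fact D)"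
  proof (rule prod_mono)
    fix i :: 'n
    have "\<gamma> i + a i \<le> D" using le_mindex_size[of "\<lambda>i. \<gamma> i + a i" i] sz by simp
    then show "0 \<le> pochhammer (real (\<gamma> i) + 1) (a i) \<and> pochhammer (real (\<gamma> i) + 1) (a i) \<le> fact D"
      using poch_le_fact pochhammer_nonneg by (simp add: pochhammer_nonneg)
  qed
  moreover have "(\<Prod>i\<in>UNIV. pochhammer (real (\<gamma> i) + 1) (a i)) \<ge> 0"
    by (simp add: prod_nonneg pochhammer_nonneg)
  ultimately show ?thesis
    using mult_left_mono[of "\<Prod>i\<in>UNIV. pochhammer (real (\<gamma> i) + 1) (a i)" "fact D ^ CARD('n)" "\<bar>c (\<lambda>i. \<gamma> i + a i)\<bar>"]
    by (simp add: mpoly_pderiv_def abs_mult mult.commute)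
qed

lemma l1_pderiv:
  fixes c :: "'n::finite mpoly_coeffs"
  assumes "mpoly_deg_le c D" "is_mpoly c"
  shows "mpoly_l1 (mpoly_pderiv a c) \<le> fact D ^ CARD('n) * mpoly_l1 c"
proof -
  let ?F = "fact D ^ CARD('n) :: real"
  let ?T = "{\<gamma>. mpoly_pderiv a c \<gamma> \<noteq> 0}"
  let ?h = "\<lambda>\<gamma>::'n\<Rightarrow>nat. (\<lambda>i. \<gamma> i + a i)"
  have inj: "inj_on ?h ?T" by (auto simp: inj_on_def fun_eq_iff)
  have fT: "finite ?T" using pderiv_is_mpoly[OF assms(2)] by (simp add: is_mpoly_def)
  have "mpoly_l1 (mpoly_pderiv a c) \<le> (\<Sum>\<gamma>\<in>?T. ?F * \<bar>c (?h \<gamma>)\<bar>)"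
    unfolding mpoly_l1_def by (rule sum_mono) (rule pderiv_coeff_bound[OF assms(1)])
  also have "\<dots> = ?F * (\<Sum>\<beta>\<in>?h ` ?T. \<bar>c \<beta>\<bar>)"
    by (simp add: sum_distrib_left sum.reindex[OF inj])
  also have "\<dots> \<le> ?F * mpoly_l1 c"
    unfolding mpoly_l1_def
    by (rule mult_left_mono, rule sum_mono2) (use assms(2) in \<open>auto simp: is_mpoly_def mpoly_pderiv_def\<close>)
  finally show ?thesis .
qed

lemma mono_lip:
  fixes y z :: "real ^ 'n::finite"
  assumes "mindex_size \<alpha> \<le> D" "norm y \<le> 2" "norm z \<le> 2"
  shows "\<bar>mmono \<alpha> y - mmono \<alpha> z\<bar> \<le> 2 ^ D * D * norm (y - z)"
proof -
  have sc: "mmono \<alpha> w = 2 ^ mindex_size \<alpha> * (\<Prod>i\<in>UNIV. (w $ i / 2) ^ (\<alpha> i))" for w :: "real^'n"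
  proof -
    have "(2::real) ^ mindex_size \<alpha> = (\<Prod>i\<in>UNIV. (2::real) ^ \<alpha> i)"
      by (simp add: mindex_size_def power_sum)
    then have "2 ^ mindex_size \<alpha> * (\<Prod>i\<in>UNIV. (w $ i / 2) ^ (\<alpha> i))
        = (\<Prod>i\<in>UNIV. (2::real) ^ \<alpha> i * (w $ i / 2) ^ (\<alpha> i))"
      by (simp add: prod.distrib)
    also have "\<dots> = (\<Prod>i\<in>UNIV. (w $ i) ^ (\<alpha> i))"
      by (rule prod.cong) (auto simp flip: power_mult_distrib)
    finally show ?thesis by (simp add: mmono_def)
  qed
  have by2: "\<bar>w $ i / 2\<bar> \<le> 1" if "norm w \<le> 2" for w :: "real^'n" and i
    using component_le_norm_cart[of w i] that by simp
  have "\<bar>(\<Prod>i\<in>UNIV. (y $ i / 2) ^ (\<alpha> i)) - (\<Prod>i\<in>UNIV. (z $ i / 2) ^ (\<alpha> i))\<bar>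
        \<le> (\<Sum>i\<in>UNIV. \<bar>(y $ i / 2) ^ (\<alpha> i) - (z $ i / 2) ^ (\<alpha> i)\<bar>)"
    using norm_prod_diff[of UNIV "\<lambda>i. (y $ i / 2) ^ (\<alpha> i)" "\<lambda>i. (z $ i / 2) ^ (\<alpha> i)"]
    using by2[OF assms(2)] by2[OF assms(3)] by (simp add: power_le_one power_abs)
  also have "\<dots> \<le> (\<Sum>i\<in>UNIV. real (\<alpha> i) * (norm (y - z) / 2))"
  proof (rule sum_mono)
    fix i
    have "\<bar>(y $ i / 2) ^ (\<alpha> i) - (z $ i / 2) ^ (\<alpha> i)\<bar> \<le> real (\<alpha> i) * \<bar>y $ i / 2 - z $ i / 2\<bar>"
      using norm_power_diff[of "y $ i / 2" "z $ i / 2" "\<alpha> i"] by2[OF assms(2)] by2[OF assms(3)] by simp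
    also have "\<bar>y $ i / 2 - z $ i / 2\<bar> \<le> norm (y - z) / 2"
    proof -
      have eq: "y $ i / 2 - z $ i / 2 = (y $ i - z $ i) / 2" by (simp add: diff_divide_distrib)
      have "\<bar>y $ i / 2 - z $ i / 2\<bar> = \<bar>y $ i - z $ i\<bar> / 2" by (simp only: eq abs_divide abs_numeral)
      then show ?thesis using component_le_norm_cart[of "y - z" i] by simp
    qed
    finally show "\<bar>(y $ i / 2) ^ (\<alpha> i) - (z $ i / 2) ^ (\<alpha> i)\<bar> \<le> real (\<alpha> i) * (norm (y - z) / 2)"
      by (simp add: mult_left_mono order_trans)
  qed
  also have "\<dots> = real (mindex_size \<alpha>) * (norm (y - z) / 2)"
    by (simp add: mindex_size_def sum_distrib_right)
  finally have P: "\<bar>(\<Prod>i\<in>UNIV. (y $ i / 2) ^ (\<alpha> i)) - (\<Prod>i\<in>UNIV. (z $ i / 2) ^ (\<alpha> i))\<bar>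
        \<le> real (mindex_size \<alpha>) * (norm (y - z) / 2)" .
  have "\<bar>mmono \<alpha> y - mmono \<alpha> z\<bar> = 2 ^ mindex_size \<alpha> *
      \<bar>(\<Prod>i\<in>UNIV. (y $ i / 2) ^ (\<alpha> i)) - (\<Prod>i\<in>UNIV. (z $ i / 2) ^ (\<alpha> i))\<bar>"
    by (simp add: sc abs_mult right_diff_distrib[symmetric])
  also have "\<dots> \<le> 2 ^ mindex_size \<alpha> * (real (mindex_size \<alpha>) * (norm (y - z) / 2))"
    by (rule mult_left_mono[OF P]) simp
  also have "\<dots> \<le> 2 ^ D * (real D * norm (y - z))"
  proof (rule mult_mono)
    show "(2::real) ^ mindex_size \<alpha> \<le> 2 ^ D" using assms(1) by (simp add: power_increasing)
    have "real (mindex_size \<alpha>) * (norm (y - z) / 2) \<le> real D * (norm (y - z) / 2)"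
      by (rule mult_right_mono) (use assms(1) in auto)
    also have "\<dots> \<le> real D * norm (y - z)" by (simp add: mult_left_mono)
    finally show "real (mindex_size \<alpha>) * (norm (y - z) / 2) \<le> real D * norm (y - z)" .
  qed auto
  finally show ?thesis by (simp add: mult.assoc)
qed


lemma eval_lip:
  fixes c :: "'n::finite mpoly_coeffs"
  assumes "mpoly_deg_le c D" "norm y \<le> 2" "norm z \<le> 2"
  shows "\<bar>mpoly_eval c y - mpoly_eval c z\<bar> \<le> mpoly_l1 c * (2 ^ D * real D) * norm (y - z)"
proof -
  let ?S = "{\<alpha>::'n\<Rightarrow>nat. mindex_size \<alpha> \<le> D}"
  have "\<bar>mpoly_eval c y - mpoly_eval c z\<bar> = \<bar>\<Sum>\<alpha>\<in>?S. c \<alpha> * (mmono \<alpha> y - mmono \<alpha> z)\<bar>"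
    by (simp add: eval_SD[OF assms(1)] sum_subtractf[symmetric] right_diff_distrib)
  also have "\<dots> \<le> (\<Sum>\<alpha>\<in>?S. \<bar>c \<alpha> * (mmono \<alpha> y - mmono \<alpha> z)\<bar>)" by (rule sum_abs)
  also have "\<dots> \<le> (\<Sum>\<alpha>\<in>?S. \<bar>c \<alpha>\<bar> * (2 ^ D * D * norm (y - z)))"
    by (rule sum_mono) (auto simp: abs_mult intro!: mult_left_mono mono_lip assms)
  also have "\<dots> = mpoly_l1 c * (2 ^ D * real D) * norm (y - z)"
    by (simp add: l1_SD[OF assms(1)] sum_distrib_right mult.assoc)
  finally show ?thesis .
qed

lemma axis_path_comp: "(x + t *\<^sub>R axis k 1) $ i = (if i = k then x $ i + t else x $ i)"
  by (simp add: axis_def)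

lemma prod_unit_poch:
  "(\<Prod>i\<in>UNIV. pochhammer (real (\<gamma> i) + 1) (unit_mindex k i)) = real (\<gamma> (k::'n::finite)) + 1"
proof -
  have "(\<Prod>i\<in>UNIV. pochhammer (real (\<gamma> i) + 1) (unit_mindex k i)) =
      pochhammer (real (\<gamma> k) + 1) (unit_mindex k k) *
      (\<Prod>i\<in>UNIV - {k}. pochhammer (real (\<gamma> i) + 1) (unit_mindex k i))"
    by (simp add: prod.remove)
  also have "(\<Prod>i\<in>UNIV - {k}. pochhammer (real (\<gamma> i) + 1) (unit_mindex k i)) = 1"
    by (rule prod.neutral) (auto simp: unit_mindex_def)
  finally show ?thesis by (simp add: unit_mindex_def)
qed

lemma deriv_axis:
  fixes c :: "'n::finite mpoly_coeffs"
  assumes "is_mpoly c"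
  shows "((\<lambda>s. mpoly_eval c (x + s *\<^sub>R axis k 1)) has_real_derivative
           mpoly_eval (mpoly_pderiv (unit_mindex k) c) (x + t *\<^sub>R axis k 1)) (at t)"
proof -
  let ?S = "{\<alpha>. c \<alpha> \<noteq> 0}"
  let ?y = "x + t *\<^sub>R axis k 1"
  define R where "R \<alpha> = (\<Prod>i\<in>UNIV - {k}. (x $ i) ^ (\<alpha> i))" for \<alpha> :: "'n \<Rightarrow> nat"
  have fS: "finite ?S" using assms by (simp add: is_mpoly_def)
  have split: "(\<Prod>i\<in>UNIV. ((x + s *\<^sub>R axis k 1) $ i) ^ (\<alpha> i)) = (x $ k + s) ^ (\<alpha> k) * R \<alpha>" for s \<alpha>
  proof -
    have "(\<Prod>i\<in>UNIV. ((x + s *\<^sub>R axis k 1) $ i) ^ (\<alpha> i)) =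
       ((x + s *\<^sub>R axis k 1) $ k) ^ (\<alpha> k) * (\<Prod>i\<in>UNIV - {k}. ((x + s *\<^sub>R axis k 1) $ i) ^ (\<alpha> i))"
      by (rule prod.remove) auto
    also have "(\<Prod>i\<in>UNIV - {k}. ((x + s *\<^sub>R axis k 1) $ i) ^ (\<alpha> i)) = R \<alpha>"
      unfolding R_def by (rule prod.cong) (auto simp: axis_def)
    finally show ?thesis by (simp add: axis_def)
  qed
  have ev: "mpoly_eval c (x + s *\<^sub>R axis k 1) = (\<Sum>\<alpha>\<in>?S. c \<alpha> * ((x $ k + s) ^ (\<alpha> k) * R \<alpha>))" for s
    by (simp only: mpoly_eval_def split)
  define f where "f \<alpha> = c \<alpha> * (real (\<alpha> k) * (x $ k + t) ^ (\<alpha> k - 1) * R \<alpha>)" for \<alpha>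
  have D1: "((\<lambda>s. \<Sum>\<alpha>\<in>?S. c \<alpha> * ((x $ k + s) ^ (\<alpha> k) * R \<alpha>)) has_real_derivative (\<Sum>\<alpha>\<in>?S. f \<alpha>)) (at t)"
    unfolding f_def
    by (rule DERIV_sum) (auto intro!: derivative_eq_intros)
  let ?U = "{\<alpha>\<in>?S. \<alpha> k \<ge> 1}"
  let ?T = "{\<gamma>. c (\<lambda>i. \<gamma> i + unit_mindex k i) \<noteq> 0}"
  let ?h = "\<lambda>\<gamma>::'n\<Rightarrow>nat. (\<lambda>i. \<gamma> i + unit_mindex k i)"
  have s1: "(\<Sum>\<alpha>\<in>?S. f \<alpha>) = (\<Sum>\<alpha>\<in>?U. f \<alpha>)"
    by (rule sum.mono_neutral_right[OF fS]) (auto simp: f_def)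
  have inj: "inj_on ?h ?T" by (auto simp: inj_on_def fun_eq_iff)
  have img: "?h ` ?T = ?U"
  proof
    show "?h ` ?T \<subseteq> ?U" by (auto simp: unit_mindex_def)
    show "?U \<subseteq> ?h ` ?T"
    proof
      fix \<alpha> assume a: "\<alpha> \<in> ?U"
      have "\<alpha> = ?h (\<lambda>i. \<alpha> i - unit_mindex k i)"
        using a by (auto simp: unit_mindex_def fun_eq_iff)
      then show "\<alpha> \<in> ?h ` ?T" using a by (intro image_eqI[of _ _ "\<lambda>i. \<alpha> i - unit_mindex k i"]) auto
    qed
  qed
  have s2: "(\<Sum>\<alpha>\<in>?U. f \<alpha>) = (\<Sum>\<gamma>\<in>?T. f (?h \<gamma>))"
    using sum.reindex[OF inj, of f] img by simp
  have Ty: "(\<Prod>i\<in>UNIV. (?y $ i) ^ (\<gamma> i)) = (x $ k + t) ^ (\<gamma> k) * R \<gamma>" for \<gamma>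
    by (rule split)
  have Rh: "R (?h \<gamma>) = R \<gamma>" for \<gamma>
    unfolding R_def by (rule prod.cong) (auto simp: unit_mindex_def)
  have s3: "f (?h \<gamma>) = mpoly_pderiv (unit_mindex k) c \<gamma> * (\<Prod>i\<in>UNIV. (?y $ i) ^ (\<gamma> i))" for \<gamma>
    unfolding Ty by (simp add: f_def Rh mpoly_pderiv_def prod_unit_poch) (simp add: unit_mindex_def mult_ac)
  have s4: "mpoly_eval (mpoly_pderiv (unit_mindex k) c) ?y =
      (\<Sum>\<gamma>\<in>?T. mpoly_pderiv (unit_mindex k) c \<gamma> * (\<Prod>i\<in>UNIV. (?y $ i) ^ (\<gamma> i)))"
  proof -
    have "{\<gamma>. mpoly_pderiv (unit_mindex k) c \<gamma> \<noteq> 0} = ?T"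
      by (auto simp: mpoly_pderiv_def prod_unit_poch)
    then show ?thesis by (simp add: mpoly_eval_def)
  qed
  have E: "(\<Sum>\<alpha>\<in>?S. f \<alpha>) = mpoly_eval (mpoly_pderiv (unit_mindex k) c) ?y"
    unfolding s1 s2 s3 s4 by (rule refl)
  show ?thesis unfolding ev E[symmetric] by (rule D1)
qed


lemma find_zero:
  fixes Q :: "'n::finite mpoly_coeffs" and x :: "real ^ 'n"
  assumes mp: "is_mpoly Q"
    and lip: "\<And>y z. norm y \<le> 2 \<Longrightarrow> norm z \<le> 2 \<Longrightarrow>
        \<bar>mpoly_eval (mpoly_pderiv (unit_mindex k) Q) y - mpoly_eval (mpoly_pderiv (unit_mindex k) Q) z\<bar>
          \<le> L * norm (y - z)"
    and x: "norm x \<le> 1" and Qx: "\<bar>mpoly_eval Q x\<bar> < a"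
    and gx: "\<bar>mpoly_eval (mpoly_pderiv (unit_mindex k) Q) x\<bar> \<ge> g"
    and r: "0 < r" "r \<le> 1" and h: "h > 0" and Lr: "L * r \<le> g - h" and ar: "a \<le> r * h"
  shows "\<exists>t. \<bar>t\<bar> \<le> r \<and> mpoly_eval Q (x + t *\<^sub>R axis k 1) = 0 \<and>
            \<bar>mpoly_eval (mpoly_pderiv (unit_mindex k) Q) (x + t *\<^sub>R axis k 1)\<bar> \<ge> h"
proof -
  define p where "p s = x + s *\<^sub>R axis k 1" for s
  define f where "f s = mpoly_eval Q (p s)" for s
  define f' where "f' s = mpoly_eval (mpoly_pderiv (unit_mindex k) Q) (p s)" for s
  have der: "DERIV f s :> f' s" for s
    unfolding f_def f'_def p_def by (rule deriv_axis[OF mp])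
  have cont: "isCont f s" for s by (rule DERIV_isCont[OF der])
  have np: "norm (p s - x) = \<bar>s\<bar>" for s by (simp add: p_def)
  have pn: "norm (p s) \<le> 2" if "\<bar>s\<bar> \<le> r" for s
  proof -
    have "norm (p s) \<le> norm x + norm (p s - x)" by (metis add.commute diff_add_cancel norm_triangle_ineq)
    then show ?thesis using np[of s] x that r by linarith
  qed
  have x0: "p 0 = x" by (simp add: p_def)
  have close: "\<bar>f' s - f' 0\<bar> \<le> g - h" if "\<bar>s\<bar> \<le> r" for s
  proof -
    have "\<bar>f' s - f' 0\<bar> \<le> L * norm (p s - p 0)"
      unfolding f'_def by (rule lip[OF pn[OF that]]) (use pn[of 0] r in auto)
    also have "\<dots> = L * \<bar>s\<bar>" using np by (simp add: x0)
    also have "\<dots> \<le> L * r"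
    proof -
      have "L \<ge> 0"
      proof -
        have "\<bar>f' r - f' 0\<bar> \<le> L * norm (p r - p 0)"
          unfolding f'_def by (rule lip) (use pn[of r] pn[of 0] r in auto)
        moreover have "norm (p r - p 0) = r" using np[of r] r by (simp add: x0)
        ultimately have "0 \<le> L * r" by (metis abs_ge_zero order_trans)
        then show ?thesis using r by (simp add: zero_le_mult_iff)
      qed
      then show ?thesis using that by (simp add: mult_left_mono)
    qed
    finally show ?thesis using Lr by linarith
  qed
  have f0: "\<bar>f 0\<bar> < a" using Qx by (simp add: f_def x0)
  have g0: "\<bar>f' 0\<bar> \<ge> g" using gx by (simp add: f'_def x0)
  show ?thesis
  proof (cases "f' 0 \<ge> 0")
    case True
    then have pos: "f' s \<ge> h" if "\<bar>s\<bar> \<le> r" for s using close[OF that] g0 by linarith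
    obtain z1 where z1: "0 < z1" "z1 < r" "f r - f 0 = (r - 0) * f' z1"
      using MVT2[of 0 r f f'] der r by auto
    have fr: "f r > 0"
    proof -
      have "r * f' z1 \<ge> r * h" using pos[of z1] z1 r by (intro mult_left_mono) auto
      moreover have "f r - f 0 = r * f' z1" using z1(3) by simp
      ultimately show ?thesis using f0 ar by linarith
    qed
    moreover obtain z2 where z2: "-r < z2" "z2 < 0" "f 0 - f (-r) = (0 - (-r)) * f' z2"
      using MVT2[of "-r" 0 f f'] der r by auto
    moreover have fmr: "f (-r) < 0"
    proof -
      have "r * f' z2 \<ge> r * h" using pos[of z2] z2 r by (intro mult_left_mono) auto
      moreover have "f 0 - f (-r) = r * f' z2" using z2(3) by simp
      ultimately show ?thesis using f0 ar by linarith
    qed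
    have "\<exists>t. -r \<le> t \<and> t \<le> r \<and> f t = 0"
      by (rule IVT[of f "-r" 0 r]) (use fr fmr r cont in auto)
    then obtain t where t: "-r \<le> t" "t \<le> r" "f t = 0" by blast
    have at: "\<bar>t\<bar> \<le> r" using t(1,2) by (simp add: abs_le_iff)
    show ?thesis using pos[OF at] at t(3) unfolding f_def f'_def p_def
      by (intro exI[of _ t]) auto
  next
    case False
    then have neg: "f' s \<le> - h" if "\<bar>s\<bar> \<le> r" for s using close[OF that] g0 by linarith
    obtain z1 where z1: "0 < z1" "z1 < r" "f r - f 0 = (r - 0) * f' z1"
      using MVT2[of 0 r f f'] der r by auto
    have fr: "f r < 0"
    proof -
      have "r * f' z1 \<le> r * (-h)" using neg[of z1] z1 r by (intro mult_left_mono) auto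
      moreover have "f r - f 0 = r * f' z1" using z1(3) by simp
      ultimately show ?thesis using f0 ar by linarith
    qed
    moreover obtain z2 where z2: "-r < z2" "z2 < 0" "f 0 - f (-r) = (0 - (-r)) * f' z2"
      using MVT2[of "-r" 0 f f'] der r by auto
    moreover have fmr: "f (-r) > 0"
    proof -
      have "r * f' z2 \<le> r * (-h)" using neg[of z2] z2 r by (intro mult_left_mono) auto
      moreover have "f 0 - f (-r) = r * f' z2" using z2(3) by simp
      ultimately show ?thesis using f0 ar by linarith
    qed
    have "\<exists>t. -r \<le> t \<and> t \<le> r \<and> f t = 0"
      by (rule IVT2[of f r 0 "-r"]) (use fr fmr r cont in auto)
    then obtain t where t: "-r \<le> t" "t \<le> r" "f t = 0" by blast
    have at: "\<bar>t\<bar> \<le> r" using t(1,2) by (simp add: abs_le_iff)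
    show ?thesis using neg[OF at] at t(3) h unfolding f_def f'_def p_def
      by (intro exI[of _ t]) auto
  qed
qed


lemma size_unit: "mindex_size (unit_mindex (i::'n::finite)) = 1"
  by (simp add: mindex_size_def unit_mindex_def)

lemma size_zero_iff: "mindex_size (\<gamma>::'n::finite \<Rightarrow> nat) = 0 \<longleftrightarrow> \<gamma> = (\<lambda>_. 0)"
  by (auto simp: mindex_size_def fun_eq_iff)

lemma chain_down:
  "mindex_size (\<beta>::'n::finite \<Rightarrow> nat) = m \<Longrightarrow>
   \<exists>\<delta>. \<delta> 0 = (\<lambda>_. 0) \<and> (\<forall>s<m. \<exists>i. \<delta> (Suc s) = (\<lambda>j. unit_mindex i j + \<delta> s j)) \<and> \<delta> m = \<beta>"
proof (induction m arbitrary: \<beta>)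
  case 0
  then show ?case using size_zero_iff by (intro exI[of _ "\<lambda>_. \<beta>"]) auto
next
  case (Suc m)
  obtain i where i: "\<beta> i > 0"
    using Suc.prems size_zero_iff[of \<beta>] by (metis gr0I nat.distinct(1))
  define \<beta>' where "\<beta>' = (\<lambda>j. \<beta> j - unit_mindex i j)"
  have b: "\<beta> = (\<lambda>j. unit_mindex i j + \<beta>' j)"
    using i by (auto simp: \<beta>'_def unit_mindex_def fun_eq_iff)
  have "mindex_size \<beta> = 1 + mindex_size \<beta>'"
    using mindex_size_add[of "unit_mindex i" \<beta>'] b size_unit[of i] by simp
  then have "mindex_size \<beta>' = m" using Suc.prems by simp
  then obtain \<delta> where d: "\<delta> 0 = (\<lambda>_. 0)" "\<forall>s<m. \<exists>i. \<delta> (Suc s) = (\<lambda>j. unit_mindex i j + \<delta> s j)"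
      "\<delta> m = \<beta>'" using Suc.IH by blast
  show ?case
  proof (intro exI[of _ "\<delta>(Suc m := \<beta>)"] conjI allI impI)
    show "(\<delta>(Suc m := \<beta>)) 0 = (\<lambda>_. 0)" using d by simp
    show "(\<delta>(Suc m := \<beta>)) (Suc m) = \<beta>" by simp
    fix s assume s: "s < Suc m"
    show "\<exists>i. (\<delta>(Suc m := \<beta>)) (Suc s) = (\<lambda>j. unit_mindex i j + (\<delta>(Suc m := \<beta>)) s j)"
    proof (cases "s = m")
      case True then show ?thesis using b d(3) by auto
    next
      case False then show ?thesis using s d(2) by auto
    qed
  qed
qed

lemma chain_exists:
  assumes "mindex_size (\<beta>::'n::finite \<Rightarrow> nat) \<le> D"
  shows "\<exists>\<delta>. \<delta> 0 = (\<lambda>_. 0) \<and> (\<forall>s<D. \<exists>i. \<delta> (Suc s) = (\<lambda>j. unit_mindex i j + \<delta> s j)) \<and>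
      \<delta> (mindex_size \<beta>) = \<beta>"
proof -
  let ?m = "mindex_size \<beta>"
  obtain \<delta> where d: "\<delta> 0 = (\<lambda>_. 0)" "\<forall>s<?m. \<exists>i. \<delta> (Suc s) = (\<lambda>j. unit_mindex i j + \<delta> s j)"
      "\<delta> ?m = \<beta>" using chain_down by blast
  fix i0 :: 'n
  define \<delta>2 where "\<delta>2 s = (if s \<le> ?m then \<delta> s else (\<lambda>j. (s - ?m) * unit_mindex i0 j + \<beta> j))" for s
  show ?thesis
  proof (intro exI[of _ \<delta>2] conjI allI impI)
    show "\<delta>2 0 = (\<lambda>_. 0)" using d by (simp add: \<delta>2_def)
    show "\<delta>2 ?m = \<beta>" using d by (simp add: \<delta>2_def)
    fix s assume s: "s < D"
    show "\<exists>i. \<delta>2 (Suc s) = (\<lambda>j. unit_mindex i j + \<delta>2 s j)"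
    proof (cases "s < ?m")
      case True then show ?thesis using d(2) by (simp add: \<delta>2_def)
    next
      case False
      have e1: "\<delta>2 s = (\<lambda>j. (s - ?m) * unit_mindex i0 j + \<beta> j)"
        using False d(3) by (cases "s = ?m") (auto simp: \<delta>2_def)
      have e2: "\<delta>2 (Suc s) = (\<lambda>j. Suc (s - ?m) * unit_mindex i0 j + \<beta> j)"
        using False by (simp add: \<delta>2_def Suc_diff_le)
      show ?thesis by (intro exI[of _ i0]) (simp add: e1 e2 fun_eq_iff)
    qed
  qed
qed

lemma chain_size:
  assumes "\<delta> 0 = (\<lambda>_. 0)" "\<forall>s<D. \<exists>i. \<delta> (Suc s) = (\<lambda>j. unit_mindex i j + \<delta> s j)"
  shows "s \<le> D \<Longrightarrow> mindex_size (\<delta> s :: 'n::finite \<Rightarrow> nat) = s"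
proof (induction s)
  case 0 then show ?case using assms(1) by (simp add: mindex_size_def)
next
  case (Suc s)
  have "s < D" using Suc.prems by simp
  then obtain i where "\<delta> (Suc s) = (\<lambda>j. unit_mindex i j + \<delta> s j)" using assms(2) by blast
  then show ?case using Suc mindex_size_add[of "unit_mindex i" "\<delta> s"] size_unit[of i] by simp
qed

lemma lt_add_unit: "(a :: 'n \<Rightarrow> nat) < (\<lambda>j. unit_mindex i j + a j)"
proof -
  have "a \<le> (\<lambda>j. unit_mindex i j + a j)" by (simp add: le_fun_def)
  moreover have "a \<noteq> (\<lambda>j. unit_mindex i j + a j)"
    by (auto simp: fun_eq_iff unit_mindex_def intro!: exI[of _ i])
  ultimately show ?thesis by (simp add: less_le)
qed


lemma mmono_le1:
  assumes x: "norm (x::real^'n::finite) \<le> 1" shows "\<bar>mmono \<gamma> x\<bar> \<le> 1"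
  unfolding mmono_def abs_prod power_abs
proof (rule prod_le_1)
  fix i
  have "\<bar>x $ i\<bar> \<le> 1" using component_le_norm_cart[of x i] x by linarith
  then show "0 \<le> \<bar>x $ i\<bar> ^ \<gamma> i \<and> \<bar>x $ i\<bar> ^ \<gamma> i \<le> 1" by (simp add: power_le_one)
qed

lemma big_coeff:
  fixes P :: "'n::finite mpoly_coeffs"
  assumes mp: "is_mpoly P" and dg: "mpoly_deg_le P D" and nz: "normalized P"
  defines "R \<equiv> 2 * real (card {\<alpha>::'n\<Rightarrow>nat. mindex_size \<alpha> \<le> D}) * fact D ^ CARD('n) + 2"
  shows "\<exists>\<beta>. mindex_size \<beta> \<le> D \<and>
      (\<forall>x. norm x \<le> 1 \<longrightarrow> \<bar>mpoly_eval (mpoly_pderiv \<beta> P) x\<bar> \<ge> 1 / (2 * R ^ Suc D))"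
proof -
  let ?S = "{\<alpha>::'n\<Rightarrow>nat. mindex_size \<alpha> \<le> D}"
  define N where "N = card ?S"
  define F where "F = (fact D ^ CARD('n) :: real)"
  have R_eq: "R = 2 * real N * F + 2" by (simp add: R_def N_def F_def)
  have F1: "F \<ge> 1" unfolding F_def by (simp add: one_le_power)
  have N0: "real N \<ge> 0" by simp
  have R2: "R \<ge> 2" using F1 N0 R_eq by simp
  define \<epsilon> where "\<epsilon> m = 1 / R ^ Suc m" for m
  have \<epsilon>pos: "\<epsilon> m > 0" for m using R2 by (simp add: \<epsilon>_def)
  have \<epsilon>anti: "\<epsilon> m' \<le> \<epsilon> m" if "m \<le> m'" for m m'
  proof -
    have "R ^ Suc m \<le> R ^ Suc m'" using R2 that by (intro power_increasing) auto
    then show ?thesis unfolding \<epsilon>_def using R2 by (intro divide_left_mono) auto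
  qed
  have \<epsilon>Suc: "\<epsilon> (Suc m) = \<epsilon> m / R" for m by (simp add: \<epsilon>_def)
  define B where "B = {\<beta>\<in>?S. \<bar>P \<beta>\<bar> \<ge> \<epsilon> (mindex_size \<beta>)}"
  have fB: "finite B" unfolding B_def by (rule finite_subset[OF _ finite_SD]) auto
  have Bne: "B \<noteq> {}"
  proof
    assume Be: "B = {}"
    have "1 = mpoly_l1 P" using nz by (simp add: normalized_def)
    also have "\<dots> = (\<Sum>\<alpha>\<in>?S. \<bar>P \<alpha>\<bar>)" by (rule l1_SD[OF dg])
    also have "\<dots> \<le> (\<Sum>\<alpha>\<in>?S. \<epsilon> 0)"
    proof (rule sum_mono)
      fix \<alpha> assume "\<alpha> \<in> ?S"
      then have "\<bar>P \<alpha>\<bar> < \<epsilon> (mindex_size \<alpha>)" using Be unfolding B_def by auto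
      then show "\<bar>P \<alpha>\<bar> \<le> \<epsilon> 0" using \<epsilon>anti[of 0 "mindex_size \<alpha>"] by simp
    qed
    also have "\<dots> = real N / R" by (simp add: N_def \<epsilon>_def)
    also have "\<dots> < 1" using R2 F1 N0 R_eq
      by (simp add: divide_less_eq) (smt (verit) mult_le_cancel_left1)
    finally show False by simp
  qed
  define m where "m = Max (mindex_size ` B)"
  have "m \<in> mindex_size ` B" unfolding m_def using fB Bne by (intro Max_in) auto
  then obtain \<beta> where \<beta>B: "\<beta> \<in> B" and m: "mindex_size \<beta> = m" by auto
  have mD: "m \<le> D" using \<beta>B m by (auto simp: B_def)
  have Pb: "\<bar>P \<beta>\<bar> \<ge> \<epsilon> m" using \<beta>B m by (auto simp: B_def)
  have small: "\<bar>P \<alpha>\<bar> \<le> \<epsilon> (Suc m)" if "mindex_size \<alpha> > m" for \<alpha>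
  proof (cases "\<alpha> \<in> ?S")
    case True
    have "\<alpha> \<notin> B"
    proof
      assume "\<alpha> \<in> B"
      then have "mindex_size \<alpha> \<le> m" unfolding m_def using fB by (intro Max_ge) auto
      then show False using that by simp
    qed
    then have "\<bar>P \<alpha>\<bar> < \<epsilon> (mindex_size \<alpha>)" using True by (auto simp: B_def)
    then show ?thesis using \<epsilon>anti[of "Suc m" "mindex_size \<alpha>"] that by simp
  next
    case False
    then have "P \<alpha> = 0" using dg by (auto simp: mpoly_deg_le_def)
    then show ?thesis using \<epsilon>pos[of "Suc m"] by simp
  qed
  show ?thesis
  proof (intro exI[of _ \<beta>] conjI allI impI)
    show "mindex_size \<beta> \<le> D" using m mD by simp
    fix x :: "real^'n" assume x: "norm x \<le> 1"
    let ?Q = "mpoly_pderiv \<beta> P"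
    have z: "(\<lambda>_. 0::nat) \<in> ?S" by (simp add: mindex_size_def)
    have "mpoly_eval ?Q x = (\<Sum>\<gamma>\<in>?S. ?Q \<gamma> * mmono \<gamma> x)"
      by (rule eval_SD[OF pderiv_deg[OF dg]])
    also have "\<dots> = ?Q (\<lambda>_. 0) * mmono (\<lambda>_. 0) x + (\<Sum>\<gamma>\<in>?S - {\<lambda>_. 0}. ?Q \<gamma> * mmono \<gamma> x)"
      by (rule sum.remove[OF finite_SD z])
    finally have ev: "mpoly_eval ?Q x = ?Q (\<lambda>_. 0) * mmono (\<lambda>_. 0) x + (\<Sum>\<gamma>\<in>?S - {\<lambda>_. 0}. ?Q \<gamma> * mmono \<gamma> x)" .
    have pi1: "(\<Prod>i\<in>UNIV. pochhammer (real 0 + 1) (\<beta> i)) \<ge> (1::real)"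
      by (rule prod_ge_1) (use poch_ge_1[of 0] in auto)
    have main: "\<bar>?Q (\<lambda>_. 0) * mmono (\<lambda>_. 0) x\<bar> \<ge> \<epsilon> m"
    proof -
      have "?Q (\<lambda>_. 0) = P \<beta> * (\<Prod>i\<in>UNIV. pochhammer (real 0 + 1) (\<beta> i))"
        by (simp add: mpoly_pderiv_def)
      moreover have "mmono (\<lambda>_. 0) x = 1" by (simp add: mmono_def)
      ultimately have "\<bar>?Q (\<lambda>_. 0) * mmono (\<lambda>_. 0) x\<bar> = \<bar>P \<beta>\<bar> * (\<Prod>i\<in>UNIV. pochhammer (real 0 + 1) (\<beta> i))"
        using pi1 by (simp add: abs_mult)
      also have "\<dots> \<ge> \<bar>P \<beta>\<bar>" using pi1 by (simp add: mult_le_cancel_left1)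
      finally show ?thesis using Pb by linarith
    qed
    have rest: "\<bar>\<Sum>\<gamma>\<in>?S - {\<lambda>_. 0}. ?Q \<gamma> * mmono \<gamma> x\<bar> \<le> real N * (F * \<epsilon> (Suc m))"
    proof -
      have "\<bar>\<Sum>\<gamma>\<in>?S - {\<lambda>_. 0}. ?Q \<gamma> * mmono \<gamma> x\<bar> \<le> (\<Sum>\<gamma>\<in>?S - {\<lambda>_. 0}. \<bar>?Q \<gamma> * mmono \<gamma> x\<bar>)"
        by (rule sum_abs)
      also have "\<dots> \<le> real (card (?S - {\<lambda>_. 0})) * (F * \<epsilon> (Suc m))"
      proof (rule sum_bounded_above)
        fix \<gamma> assume g: "\<gamma> \<in> ?S - {\<lambda>_. 0}"
        then have "mindex_size \<gamma> \<noteq> 0" using size_zero_iff by blast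
        then have "mindex_size (\<lambda>i. \<gamma> i + \<beta> i) > m" using mindex_size_add[of \<gamma> \<beta>] m by simp
        then have s: "\<bar>P (\<lambda>i. \<gamma> i + \<beta> i)\<bar> \<le> \<epsilon> (Suc m)" by (rule small)
        have "\<bar>?Q \<gamma>\<bar> \<le> F * \<bar>P (\<lambda>i. \<gamma> i + \<beta> i)\<bar>"
          unfolding F_def by (rule pderiv_coeff_bound[OF dg])
        also have "\<dots> \<le> F * \<epsilon> (Suc m)" using s F1 by (intro mult_left_mono) auto
        finally have q: "\<bar>?Q \<gamma>\<bar> \<le> F * \<epsilon> (Suc m)" .
        have "\<bar>?Q \<gamma> * mmono \<gamma> x\<bar> = \<bar>?Q \<gamma>\<bar> * \<bar>mmono \<gamma> x\<bar>" by (simp add: abs_mult)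
        also have "\<dots> \<le> F * \<epsilon> (Suc m) * 1"
          using q mmono_le1[OF x, of \<gamma>] by (intro mult_mono) auto
        finally show "\<bar>?Q \<gamma> * mmono \<gamma> x\<bar> \<le> F * \<epsilon> (Suc m)" by simp
      qed
      also have "\<dots> \<le> real N * (F * \<epsilon> (Suc m))"
      proof (rule mult_right_mono)
        show "real (card (?S - {\<lambda>_. 0})) \<le> real N"
          unfolding N_def using card_mono[OF finite_SD, of "?S - {\<lambda>_. 0}" D] by simp
        show "0 \<le> F * \<epsilon> (Suc m)" using F1 \<epsilon>pos[of "Suc m"] by simp
      qed
      finally show ?thesis .
    qed
    have "real N * (F * \<epsilon> (Suc m)) \<le> \<epsilon> m / 2"
    proof -
      have "real N * (F * \<epsilon> (Suc m)) = (real N * F / R) * \<epsilon> m" by (simp add: \<epsilon>Suc)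
      also have "\<dots> \<le> (1/2) * \<epsilon> m"
      proof (rule mult_right_mono)
        have nf: "2 * (real N * F) \<le> R" using R_eq by simp
        have "real N * F \<le> 1/2 * R" using nf by simp
        then show "real N * F / R \<le> 1/2" using R2 by (simp add: pos_divide_le_eq)
        show "0 \<le> \<epsilon> m" using \<epsilon>pos[of m] by simp
      qed
      finally show ?thesis by simp
    qed
    then have "\<bar>mpoly_eval ?Q x\<bar> \<ge> \<epsilon> m / 2" using ev main rest by linarith
    moreover have "\<epsilon> m \<ge> \<epsilon> D" using \<epsilon>anti mD by blast
    ultimately show "\<bar>mpoly_eval ?Q x\<bar> \<ge> 1 / (2 * R ^ Suc D)" by (simp add: \<epsilon>_def)
  qed
qed


primrec kdown :: "real \<Rightarrow> real \<Rightarrow> nat \<Rightarrow> nat \<Rightarrow> real" where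
  "kdown G K A 0 = K"
| "kdown G K A (Suc k) = root (Suc A) (kdown G K A k / (4 * G))"

primrec kup :: "real \<Rightarrow> real \<Rightarrow> nat \<Rightarrow> nat \<Rightarrow> real" where
  "kup G T A 0 = T"
| "kup G T A (Suc k) = 4 * G * (kup G T A k) ^ (Suc A)"

lemma kup_ge: assumes "G \<ge> 1" "T \<ge> 1" shows "kup G T A k \<ge> T"
proof (induction k)
  case 0 then show ?case by simp
next
  case (Suc k)
  let ?x = "kup G T A k"
  have x1: "?x \<ge> 1" using Suc assms by linarith
  have "?x ^ 1 \<le> ?x ^ Suc A" by (rule power_increasing) (use x1 in auto)
  then have "?x \<le> ?x ^ Suc A" by simp
  also have "\<dots> \<le> 4 * G * ?x ^ Suc A"
  proof -
    have "?x ^ Suc A \<ge> 0" using x1 by simp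
    moreover have "4 * G \<ge> 1" using assms by simp
    ultimately have "1 * ?x ^ Suc A \<le> 4 * G * ?x ^ Suc A" by (intro mult_right_mono) auto
    then show ?thesis by simp
  qed
  finally show ?case using Suc by simp
qed

lemma kdown_ge:
  assumes G: "G \<ge> 1" and T: "T \<ge> 1" and K: "K \<ge> kup G T A D"
  shows "k \<le> D \<Longrightarrow> kdown G K A k \<ge> kup G T A (D - k)"
proof (induction k)
  case 0 then show ?case using K by simp
next
  case (Suc k)
  then have IH: "kdown G K A k \<ge> kup G T A (D - k)" by simp
  have e: "D - k = Suc (D - Suc k)" using Suc.prems by simp
  let ?y = "kup G T A (D - Suc k)"
  have y0: "?y \<ge> 0" using kup_ge[OF G T] T by (meson order_trans zero_le_one)
  have q: "kdown G K A k / (4 * G) \<ge> ?y ^ Suc A"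
    using IH G unfolding e by (simp add: pos_le_divide_eq mult.commute)
  have rr: "root (Suc A) (kdown G K A k / (4 * G)) \<ge> root (Suc A) (?y ^ Suc A)"
    using real_root_le_iff[of "Suc A" "?y ^ Suc A" "kdown G K A k / (4 * G)"] q by blast
  have r: "root (Suc A) (?y ^ Suc A) = ?y" by (rule real_root_power_cancel) (use y0 in auto)
  have "root (Suc A) (kdown G K A k / (4 * G)) \<ge> ?y" using rr unfolding r .
  then show ?case unfolding kdown.simps .
qed

lemma kdown_pow:
  assumes "kdown G K A k \<ge> 0" "G > 0"
  shows "kdown G K A (Suc k) ^ Suc A = kdown G K A k / (4 * G)"
  unfolding kdown.simps by (rule real_root_pow_pos2) (use assms in auto)


lemma cover_main:
  fixes P :: "'n::finite mpoly_coeffs" and Ks :: "nat \<Rightarrow> real" and \<delta> :: "nat \<Rightarrow> ('n \<Rightarrow> nat)"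
    and x :: "real ^ 'n"
  assumes mp: "is_mpoly P"
    and lip: "\<And>a y z. norm y \<le> 2 \<Longrightarrow> norm z \<le> 2 \<Longrightarrow>
        \<bar>mpoly_eval (mpoly_pderiv a P) y - mpoly_eval (mpoly_pderiv a P) z\<bar> \<le> L * norm (y - z)"
    and L0: "L \<ge> 0" and GL: "G \<ge> L + 1" and A1: "A \<ge> 1"
    and Ksge: "\<And>j. j \<in> {1..D+1} \<Longrightarrow> Ks j \<ge> 1"
    and Ksrel: "\<And>j. j \<in> {1..D} \<Longrightarrow> Ks (j + 1) \<ge> 4 * G * Ks j ^ (A + 1)"
    and d0: "\<delta> 0 = (\<lambda>_. 0)" and dS: "\<forall>s<D. \<exists>i. \<delta> (Suc s) = (\<lambda>j. unit_mindex i j + \<delta> s j)"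
    and x: "norm x < 1" and Px: "\<bar>mpoly_eval P x\<bar> < 1 / Ks (D + 1)"
    and notcov: "x \<notin> (\<Union>j\<in>{1..D}. nbhd (1 / Ks j ^ A)
                        (zero_set (mpoly_pderiv (\<delta> (D - j)) P) \<inter>
                         {x. norm (mpoly_grad (mpoly_pderiv (\<delta> (D - j)) P) x) \<ge> 1 / Ks j}))"
  shows "s \<le> D \<Longrightarrow> \<bar>mpoly_eval (mpoly_pderiv (\<delta> s) P) x\<bar> < G / Ks (D + 1 - s)"
proof (induction s)
  case 0
  have K1: "Ks (D + 1) \<ge> 1" using Ksge by simp
  have G1: "G \<ge> 1" using GL L0 by simp
  have "1 / Ks (D + 1) \<le> G / Ks (D + 1)" using K1 G1 by (intro divide_right_mono) auto
  then show ?case using Px d0 by (simp add: pderiv_zero)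
next
  case (Suc s)
  then have sD: "s < D" by simp
  define j where "j = D - s"
  have j: "j \<in> {1..D}" using sD by (simp add: j_def)
  have jj: "D + 1 - s = j + 1" "D + 1 - Suc s = j" "D - j = s" using sD by (auto simp: j_def)
  have IH: "\<bar>mpoly_eval (mpoly_pderiv (\<delta> s) P) x\<bar> < G / Ks (j + 1)"
    using Suc.IH sD jj by simp
  obtain i where di: "\<delta> (Suc s) = (\<lambda>k. unit_mindex i k + \<delta> s k)" using dS sD by blast
  let ?Q = "mpoly_pderiv (\<delta> s) P"
  have Qd: "mpoly_pderiv (\<delta> (Suc s)) P = mpoly_pderiv (unit_mindex i) ?Q"
    by (simp add: di pderiv_compose)
  define K where "K = Ks j"
  have K1: "K \<ge> 1" using Ksge j by (simp add: K_def)
  have KA: "K ^ A \<ge> K" using K1 A1 by (metis power_increasing power_one_right)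
  have KA1: "K ^ A \<ge> 1" using K1 KA by linarith
  show ?case unfolding Qd jj(2)
  proof (rule ccontr)
    assume "\<not> \<bar>mpoly_eval (mpoly_pderiv (unit_mindex i) ?Q) x\<bar> < G / Ks j"
    then have gx: "\<bar>mpoly_eval (mpoly_pderiv (unit_mindex i) ?Q) x\<bar> \<ge> G / K" by (simp add: K_def)
    define r where "r = 1 / (2 * K ^ A)"
    have r0: "0 < r" using KA1 by (simp add: r_def)
    have r1: "r \<le> 1" using KA1 by (simp add: r_def)
    have rK: "r \<le> 1 / K"
    proof -
      have "K \<le> 2 * K ^ A" using KA K1 by linarith
      then show ?thesis unfolding r_def using K1 by (intro divide_left_mono) auto
    qed
    have Lr: "L * r \<le> G / K - 1 / K"
    proof -
      have "L * r \<le> L * (1 / K)" using rK L0 by (rule mult_left_mono)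
      also have "\<dots> \<le> (G - 1) / K" using GL K1 by (simp add: divide_right_mono)
      finally show ?thesis by (simp add: diff_divide_distrib)
    qed
    have ar: "G / Ks (j + 1) \<le> r * (1 / K)"
    proof -
      have "Ks (j + 1) \<ge> 4 * G * K ^ (A + 1)" using Ksrel[OF j] by (simp add: K_def)
      have Gp: "G > 0" using GL L0 by simp
      have KA1p: "K ^ (A + 1) > 0" using K1 by simp
      have "G / Ks (j + 1) \<le> G / (4 * G * K ^ (A + 1))"
      proof -
        have p1: "0 < 4 * G * K ^ (A + 1)" using Gp KA1p by simp
        have p2: "0 < Ks (j + 1)" using p1 \<open>Ks (j + 1) \<ge> 4 * G * K ^ (A + 1)\<close> by linarith
        show ?thesis
          by (rule divide_left_mono[OF \<open>Ks (j + 1) \<ge> 4 * G * K ^ (A + 1)\<close> _ mult_pos_pos[OF p2 p1]])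
            (use Gp in simp)
      qed
      also have "\<dots> = 1 / (4 * K ^ (A + 1))" using Gp by simp
      also have "\<dots> \<le> 1 / (2 * K ^ (A + 1))" by (rule frac_le) (use KA1p in auto)
      also have "\<dots> = r * (1 / K)" unfolding r_def using K1 by (simp add: power_add)
      finally show ?thesis .
    qed
    have lipQ: "\<And>y z. norm y \<le> 2 \<Longrightarrow> norm z \<le> 2 \<Longrightarrow>
        \<bar>mpoly_eval (mpoly_pderiv (unit_mindex i) ?Q) y - mpoly_eval (mpoly_pderiv (unit_mindex i) ?Q) z\<bar>
          \<le> L * norm (y - z)"
      unfolding pderiv_compose by (rule lip)
    obtain t where t: "\<bar>t\<bar> \<le> r" "mpoly_eval ?Q (x + t *\<^sub>R axis i 1) = 0"
        "\<bar>mpoly_eval (mpoly_pderiv (unit_mindex i) ?Q) (x + t *\<^sub>R axis i 1)\<bar> \<ge> 1 / K"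
      using find_zero[of ?Q i L x "G / Ks (j + 1)" "G / K" r "1 / K",
          OF pderiv_is_mpoly[OF mp] lipQ _ IH gx r0 r1 _ Lr ar] x K1 by auto
    let ?y = "x + t *\<^sub>R axis i 1"
    have "norm (mpoly_grad ?Q ?y) \<ge> 1 / K"
    proof -
      have "mpoly_grad ?Q ?y $ i = mpoly_eval (mpoly_pderiv (unit_mindex i) ?Q) ?y"
        by (simp add: mpoly_grad_def)
      then show ?thesis using t(3) component_le_norm_cart[of "mpoly_grad ?Q ?y" i] by linarith
    qed
    moreover have "dist x ?y < 1 / K ^ A"
    proof -
      have "dist x ?y = \<bar>t\<bar>" by (simp add: dist_norm)
      also have "\<dots> \<le> r" by (rule t(1))
      also have "\<dots> < 1 / K ^ A" unfolding r_def using KA1 by (simp add: divide_strict_left_mono)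
      finally show ?thesis .
    qed
    ultimately have "x \<in> nbhd (1 / Ks j ^ A) (zero_set (mpoly_pderiv (\<delta> (D - j)) P) \<inter>
                         {x. norm (mpoly_grad (mpoly_pderiv (\<delta> (D - j)) P) x) \<ge> 1 / Ks j})"
      using t(2) jj(3) unfolding nbhd_def zero_set_def K_def by blast
    then show False using notcov j by blast
  qed
qed

theorem mainTheorem7:
  fixes A D :: nat
  assumes "A \<ge> 1"
  shows "\<exists>C::real. C \<ge> 1 \<and> (\<exists>K0::real. \<forall>K::real. K > max 1 K0 \<longrightarrow>
     (\<exists>Ks :: nat \<Rightarrow> real.
        Ks (D + 1) = K \<and> 0 < Ks 1 \<and>
        (\<forall>j\<in>{1..D}. Ks j \<le> Ks (j + 1) \<and>
                     Ks (j + 1) \<le> C * Ks j ^ (A + 1) \<and>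
                     Ks j ^ (A + 1) \<le> C * Ks (j + 1)) \<and>
        (\<forall>P :: ('n::finite) mpoly_coeffs.
            is_mpoly P \<and> mpoly_deg_le P D \<and> normalized P \<longrightarrow>
            (\<exists>\<alpha> :: nat \<Rightarrow> ('n \<Rightarrow> nat).
                (\<forall>j\<in>{1..D}. mindex_size (\<alpha> j) = D - j) \<and>
                (\<forall>j\<in>{1..<D}. \<alpha> (j + 1) < \<alpha> j) \<and>
                {x. \<bar>mpoly_eval P x\<bar> < 1 / Ks (D + 1)} \<inter> ball 0 1
                  \<subseteq> (\<Union>j\<in>{1..D}. nbhd (1 / Ks j ^ A)
                        (zero_set (mpoly_pderiv (\<alpha> j) P) \<inter>
                         {x. norm (mpoly_grad (mpoly_pderiv (\<alpha> j) P) x) \<ge> 1 / Ks j}))))))"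
proof -
  define F :: real where "F = fact D ^ CARD('n)"
  define L where "L = F * (2 ^ D * real D)"
  define G where "G = L + 2"
  define R where "R = 2 * real (card {\<alpha>::'n\<Rightarrow>nat. mindex_size \<alpha> \<le> D}) * fact D ^ CARD('n) + 2"
  define \<kappa> where "\<kappa> = 1 / (2 * R ^ Suc D)"
  define T where "T = max 1 (G / \<kappa>)"
  have F1: "F \<ge> 1" unfolding F_def by (simp add: one_le_power)
  have L0: "L \<ge> 0" unfolding L_def using F1 by simp
  have GL: "G \<ge> L + 1" unfolding G_def by simp
  have G1: "G \<ge> 1" using GL L0 by simp
  have R2: "R \<ge> 2" unfolding R_def by simp
  have \<kappa>pos: "\<kappa> > 0" unfolding \<kappa>_def using R2 by simp
  have T1: "T \<ge> 1" unfolding T_def by simp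
  have TG: "T \<ge> G / \<kappa>" unfolding T_def by simp
  have GT: "G / T \<le> \<kappa>"
  proof -
    have "G \<le> T * \<kappa>" using TG \<kappa>pos by (simp add: pos_divide_le_eq)
    then show ?thesis using T1 by (simp add: pos_divide_le_eq mult.commute)
  qed
  show ?thesis
  proof (rule exI[of _ "4 * G"], intro conjI exI[of _ "kup G T A D"] allI impI)
    show "4 * G \<ge> 1" using G1 by simp
    fix K :: real assume K: "K > max 1 (kup G T A D)"
    then have Kge: "K \<ge> kup G T A D" by simp
    define Ks where "Ks j = kdown G K A (D + 1 - j)" for j
    have KsT: "Ks j \<ge> T" if "j \<in> {1..D+1}" for j
    proof -
      have "Ks j \<ge> kup G T A (D - (D + 1 - j))"
        unfolding Ks_def using that by (intro kdown_ge[OF G1 T1 Kge]) auto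
      then show ?thesis using kup_ge[OF G1 T1, of A "D - (D + 1 - j)"] by linarith
    qed
    have Ks1: "Ks j \<ge> 1" if "j \<in> {1..D+1}" for j using KsT[OF that] T1 by linarith
    have Kspow: "Ks j ^ (A + 1) = Ks (j + 1) / (4 * G)" if j: "j \<in> {1..D}" for j
    proof -
      have e: "D + 1 - j = Suc (D + 1 - (j + 1))" using j by auto
      have "Ks (j + 1) \<ge> 0" using Ks1[of "j+1"] j by simp
      then show ?thesis unfolding Ks_def e using kdown_pow[of G K A] G1 by simp
    qed
    have Ksrel: "Ks (j + 1) \<ge> 4 * G * Ks j ^ (A + 1)" if j: "j \<in> {1..D}" for j
      using Kspow[OF j] G1 by simp
    have Ksstep: "Ks j \<le> Ks (j + 1)" if j: "j \<in> {1..D}" for j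
    proof -
      have k1: "Ks j \<ge> 1" using Ks1 j by simp
      have "Ks j ^ 1 \<le> Ks j ^ (A + 1)" by (rule power_increasing) (use k1 in auto)
      also have "\<dots> = Ks (j + 1) / (4 * G)" by (rule Kspow[OF j])
      also have "\<dots> \<le> Ks (j + 1)" using G1 Ks1[of "j+1"] j by (simp add: divide_le_eq)
      finally show ?thesis by simp
    qed
    have Ksmono: "Ks 1 \<le> Ks j" if "j \<in> {1..D+1}" for j
      using that
    proof (induction j)
      case 0 then show ?case by simp
    next
      case (Suc j)
      show ?case
      proof (cases "j = 0")
        case True then show ?thesis by simp
      next
        case False
        then have "Ks 1 \<le> Ks j" using Suc by simp
        also have "Ks j \<le> Ks (j + 1)" using Ksstep[of j] Suc.prems False by simp
        finally show ?thesis by simp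
      qed
    qed
    show "\<exists>Ks :: nat \<Rightarrow> real.
        Ks (D + 1) = K \<and> 0 < Ks 1 \<and>
        (\<forall>j\<in>{1..D}. Ks j \<le> Ks (j + 1) \<and>
                     Ks (j + 1) \<le> 4 * G * Ks j ^ (A + 1) \<and>
                     Ks j ^ (A + 1) \<le> 4 * G * Ks (j + 1)) \<and>
        (\<forall>P :: ('n::finite) mpoly_coeffs.
            is_mpoly P \<and> mpoly_deg_le P D \<and> normalized P \<longrightarrow>
            (\<exists>\<alpha> :: nat \<Rightarrow> ('n \<Rightarrow> nat).
                (\<forall>j\<in>{1..D}. mindex_size (\<alpha> j) = D - j) \<and>
                (\<forall>j\<in>{1..<D}. \<alpha> (j + 1) < \<alpha> j) \<and>
                {x. \<bar>mpoly_eval P x\<bar> < 1 / Ks (D + 1)} \<inter> ball 0 1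
                  \<subseteq> (\<Union>j\<in>{1..D}. nbhd (1 / Ks j ^ A)
                        (zero_set (mpoly_pderiv (\<alpha> j) P) \<inter>
                         {x. norm (mpoly_grad (mpoly_pderiv (\<alpha> j) P) x) \<ge> 1 / Ks j}))))"
    proof (intro exI[of _ Ks] conjI ballI allI impI)
      show "Ks (D + 1) = K" by (simp add: Ks_def)
      show "0 < Ks 1" using Ks1[of 1] by simp
      fix j assume j: "j \<in> {1..D}"
      show "Ks j \<le> Ks (j + 1)" by (rule Ksstep[OF j])
      show "Ks (j + 1) \<le> 4 * G * Ks j ^ (A + 1)" using Kspow[OF j] G1 by simp
      have "Ks (j + 1) / (4 * G) \<le> 4 * G * Ks (j + 1)"
      proof -
        have k0: "Ks (j + 1) \<ge> 0" using Ks1[of "j+1"] j by simp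
        have m: "Ks (j + 1) * 1 \<le> Ks (j + 1) * (4 * G)" by (rule mult_left_mono) (use G1 k0 in auto)
        have "Ks (j + 1) / (4 * G) \<le> Ks (j + 1)" using m G1 by (simp add: divide_le_eq)
        also have "\<dots> \<le> 4 * G * Ks (j + 1)" using G1 k0 by (simp add: mult_le_cancel_right1)
        finally show ?thesis .
      qed
      then show "Ks j ^ (A + 1) \<le> 4 * G * Ks (j + 1)" using Kspow[OF j] by simp
    next
      fix P :: "'n mpoly_coeffs"
      assume "is_mpoly P \<and> mpoly_deg_le P D \<and> normalized P"
      then have mp: "is_mpoly P" and dg: "mpoly_deg_le P D" and nz: "normalized P" by auto
      obtain \<beta> where \<beta>D: "mindex_size \<beta> \<le> D"
        and \<beta>lb: "\<And>x. norm x \<le> 1 \<Longrightarrow> \<bar>mpoly_eval (mpoly_pderiv \<beta> P) x\<bar> \<ge> \<kappa>"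
        using big_coeff[OF mp dg nz] unfolding \<kappa>_def R_def by blast
      obtain \<delta> where d0: "\<delta> 0 = (\<lambda>_. 0)"
        and dS: "\<forall>s<D. \<exists>i. \<delta> (Suc s) = (\<lambda>j. unit_mindex i j + \<delta> s j)"
        and dm: "\<delta> (mindex_size \<beta>) = \<beta>"
        using chain_exists[OF \<beta>D] by blast
      have lip: "\<bar>mpoly_eval (mpoly_pderiv a P) y - mpoly_eval (mpoly_pderiv a P) z\<bar> \<le> L * norm (y - z)"
        if "norm y \<le> 2" "norm z \<le> 2" for a y z
      proof -
        have "\<bar>mpoly_eval (mpoly_pderiv a P) y - mpoly_eval (mpoly_pderiv a P) z\<bar>
            \<le> mpoly_l1 (mpoly_pderiv a P) * (2 ^ D * real D) * norm (y - z)"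
          by (rule eval_lip[OF pderiv_deg[OF dg] that])
        also have "\<dots> \<le> F * (2 ^ D * real D) * norm (y - z)"
        proof -
          have "mpoly_l1 (mpoly_pderiv a P) \<le> F"
            using l1_pderiv[OF dg mp, of a] nz by (simp add: normalized_def F_def)
          then show ?thesis by (intro mult_right_mono) auto
        qed
        finally show ?thesis by (simp add: L_def)
      qed
      show "\<exists>\<alpha> :: nat \<Rightarrow> ('n \<Rightarrow> nat).
                (\<forall>j\<in>{1..D}. mindex_size (\<alpha> j) = D - j) \<and>
                (\<forall>j\<in>{1..<D}. \<alpha> (j + 1) < \<alpha> j) \<and>
                {x. \<bar>mpoly_eval P x\<bar> < 1 / Ks (D + 1)} \<inter> ball 0 1
                  \<subseteq> (\<Union>j\<in>{1..D}. nbhd (1 / Ks j ^ A)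
                        (zero_set (mpoly_pderiv (\<alpha> j) P) \<inter>
                         {x. norm (mpoly_grad (mpoly_pderiv (\<alpha> j) P) x) \<ge> 1 / Ks j}))"
      proof (intro exI[of _ "\<lambda>j. \<delta> (D - j)"] conjI ballI subsetI)
        fix j assume "j \<in> {1..D}"
        then show "mindex_size (\<delta> (D - j)) = D - j" using chain_size[OF d0 dS] by simp
      next
        fix j assume j: "j \<in> {1..<D}"
        then have e: "D - j = Suc (D - (j + 1))" "D - (j + 1) < D" by auto
        then obtain i where "\<delta> (Suc (D - (j + 1))) = (\<lambda>k. unit_mindex i k + \<delta> (D - (j + 1)) k)"
          using dS by blast
        then show "\<delta> (D - (j + 1)) < \<delta> (D - j)" using e(1) lt_add_unit by metis
      next
        fix x assume xin: "x \<in> {x. \<bar>mpoly_eval P x\<bar> < 1 / Ks (D + 1)} \<inter> ball 0 1"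
        show "x \<in> (\<Union>j\<in>{1..D}. nbhd (1 / Ks j ^ A)
                        (zero_set (mpoly_pderiv (\<delta> (D - j)) P) \<inter>
                         {x. norm (mpoly_grad (mpoly_pderiv (\<delta> (D - j)) P) x) \<ge> 1 / Ks j}))"
        proof (rule ccontr)
          assume nc: "x \<notin> (\<Union>j\<in>{1..D}. nbhd (1 / Ks j ^ A)
                        (zero_set (mpoly_pderiv (\<delta> (D - j)) P) \<inter>
                         {x. norm (mpoly_grad (mpoly_pderiv (\<delta> (D - j)) P) x) \<ge> 1 / Ks j}))"
          have xn: "norm x < 1" using xin by (simp add: dist_norm)
          have Px: "\<bar>mpoly_eval P x\<bar> < 1 / Ks (D + 1)" using xin by simp
          have "\<bar>mpoly_eval (mpoly_pderiv (\<delta> (mindex_size \<beta>)) P) x\<bar> < G / Ks (D + 1 - mindex_size \<beta>)"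
            by (rule cover_main[OF mp lip L0 GL assms Ks1 Ksrel d0 dS xn Px nc \<beta>D])
          then have lt: "\<bar>mpoly_eval (mpoly_pderiv \<beta> P) x\<bar> < G / Ks (D + 1 - mindex_size \<beta>)"
            using dm by simp
          have "G / Ks (D + 1 - mindex_size \<beta>) \<le> G / Ks 1"
          proof -
            have "Ks 1 \<le> Ks (D + 1 - mindex_size \<beta>)" using Ksmono \<beta>D by simp
            then show ?thesis using Ks1[of 1] G1 by (intro divide_left_mono) auto
          qed
          also have "\<dots> \<le> G / T" using KsT[of 1] T1 G1 by (intro divide_left_mono) auto
          also have "\<dots> \<le> \<kappa>" by (rule GT)
          finally have "\<bar>mpoly_eval (mpoly_pderiv \<beta> P) x\<bar> < \<kappa>" using lt by linarith
          then show False using \<beta>lb[of x] xn by simp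
        qed
      qed
    qed
  qed
qed

end
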